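(* Let $(\mathcal{M},g,\nabla,\nabla^* )$ be an $n$-dimensional smooth Riemannian manifold with torsion-free affine connections $\nabla,\nabla^*$ dual with respect to $g$, let $f:\mathcal{M}\to\mathbb{R}$ be smooth, and let $(\varphi,\xi)$ be a coordinate chart on $\mathcal{M}$. Assume there is a point $p^\star$ (in the chart domain) with $\operatorname{grad} f(p^\star)=0$ and $\mathrm{Hess}^*f(p^\star)\succ0$, i.e. $\langle\mathrm{Hess}^*f(p^\star)[X],X\rangle>0$ for all nonzero $X\in T_{p^\star}\mathcal{M}$. Then there exists a neighborhood $\mathcal{U}\subset\mathcal{M}$ of $p^\star$ such that for every initial point $p_0\in\mathcal{U}$, the coordinate-based dual Riemannian Newton method generates an infinite sequence $(p_k)$ that converges quadratically to $p^\star$.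
   Context: Duality: $X\langle Y,Z\rangle=\langle\nabla_XY,Z\rangle+\langle Y,\nabla^*_XZ\rangle$ for all vector fields. $\operatorname{grad} f(p)$ is the unique vector with $Df(p)[X]=\langle\operatorname{grad} f(p),X\rangle$; $\mathrm{Hess}^*f(p)[X]=\nabla^*_X\operatorname{grad} f$. In the chart, with $\xi^p=\varphi(p)$: $\mathbf{G}(\xi)=[g_{ij}(\xi)]$, $\boldsymbol{\nabla}f(\xi)$ the vector of partials of $f\circ\varphi^{-1}$, $a(\xi)=\mathbf{G}^{-1}(\xi)\boldsymbol{\nabla}f(\xi)$, Christoffel symbols $\Gamma^k_{ij}$ of $\nabla$ and $\Gamma^{*}_{ij}{}^k$ of $\nabla^*$ defined by $\nabla_{\partial/\partial\xi_i}\partial/\partial\xi_j=\sum_k\Gamma^k_{ij}\partial/\partial\xi_k$ and $\nabla^*_{\partial/\partial\xi_i}\partial/\partial\xi_j=\sum_k\Gamma^{*}_{ij}{}^k\partial/\partial\xi_k$, and $\mathbf{H}^*_{ij}(\xi)=\partial a_j/\partial\xi_i+\sum_k a_k(\xi)\Gamma^{*}_{ik}{}^j(\xi)$. The coordinate-based dual Riemannian Newton method iterates, from $\xi^{p_k}$: solve $\mathbf{H}^{*\top}(\xi^{p_k})\boldsymbol{\beta}=-\mathbf{G}^{-1}(\xi^{p_k})\boldsymbol{\nabla}f(\xi^{p_k})$ for $\boldsymbol{\beta}$, then set $\xi^{p_{k+1}}_i=\xi^{p_k}_i+\beta_i-\tfrac12\sum_{j,k}\Gamma^i_{jk}(\xi^{p_k})\beta_j\beta_k$.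 Quadratic convergence means $\xi^{p_k}\to\xi^{p^\star}$ and there is a constant $C$ with $\|\xi^{p_{k+1}}-\xi^{p^\star}\|\le C\|\xi^{p_k}-\xi^{p^\star}\|^2$ for all $k$. *)

theory Defs
  imports "HOL-Analysis.Analysis"
begin

text \<open>Everything is expressed in the coordinate chart: points of the chart domain are
  identified with their coordinates \<open>\<xi> \<in> \<Omega> \<subseteq> real^'n\<close> (\<open>\<Omega>\<close> open).\<close>

fun Ck_on :: "nat \<Rightarrow> (real^'n \<Rightarrow> real) \<Rightarrow> (real^'n) set \<Rightarrow> bool" where
  "Ck_on 0 h S = continuous_on S h"
| "Ck_on (Suc k) h S =
     (h differentiable_on S \<and> (\<forall>v. Ck_on k (\<lambda>x. frechet_derivative h (at x) v) S))"

definition smooth_on :: "(real^'n \<Rightarrow> real) \<Rightarrow> (real^'n) set \<Rightarrow> bool" where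
  "smooth_on h S \<longleftrightarrow> (\<forall>k. Ck_on k h S)"

definition partial :: "'n::finite \<Rightarrow> (real^'n \<Rightarrow> real) \<Rightarrow> real^'n \<Rightarrow> real" where
  "partial i h x = frechet_derivative h (at x) (axis i 1)"

definition coord_grad :: "(real^'n \<Rightarrow> real) \<Rightarrow> real^'n \<Rightarrow> real^'n" where
  "coord_grad f x = (\<chi> i. partial i f x)"

text \<open>a(xi) = G(xi)^{-1} nabla f(xi): coordinates of the Riemannian gradient\<close>
definition agrad :: "(real^'n \<Rightarrow> real^'n^'n) \<Rightarrow> (real^'n \<Rightarrow> real) \<Rightarrow> real^'n \<Rightarrow> real^'n" where
  "agrad G f x = matrix_inv (G x) *v coord_grad f x"

text \<open>Christoffel symbols are encoded as \<open>Gam x i j k = \<Gamma>^k_{ij}(x)\<close> and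
  \<open>Gs x i j k = \<Gamma>*_{ij}^k(x)\<close>.
  \<open>Hstar ... x $ i $ j = \<partial>a_j/\<partial>\<xi>_i + \<Sum>_k a_k \<Gamma>*_{ik}^j\<close>.\<close>
definition Hstar :: "(real^'n \<Rightarrow> real^'n^'n) \<Rightarrow> (real^'n \<Rightarrow> 'n \<Rightarrow> 'n \<Rightarrow> 'n \<Rightarrow> real)
     \<Rightarrow> (real^'n \<Rightarrow> real) \<Rightarrow> real^'n \<Rightarrow> real^'n^'n" where
  "Hstar G Gs f x = (\<chi> i j. partial i (\<lambda>y. agrad G f y $ j) x
                          + (\<Sum>k\<in>UNIV. agrad G f x $ k * Gs x i k j))"

definition newton_beta :: "(real^'n \<Rightarrow> real^'n^'n) \<Rightarrow> (real^'n \<Rightarrow> 'n \<Rightarrow> 'n \<Rightarrow> 'n \<Rightarrow> real)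
     \<Rightarrow> (real^'n \<Rightarrow> real) \<Rightarrow> real^'n \<Rightarrow> real^'n" where
  "newton_beta G Gs f x = matrix_inv (transpose (Hstar G Gs f x)) *v (- agrad G f x)"

definition newton_step :: "(real^'n \<Rightarrow> real^'n^'n) \<Rightarrow> (real^'n \<Rightarrow> 'n \<Rightarrow> 'n \<Rightarrow> 'n \<Rightarrow> real)
     \<Rightarrow> (real^'n \<Rightarrow> 'n \<Rightarrow> 'n \<Rightarrow> 'n \<Rightarrow> real) \<Rightarrow> (real^'n \<Rightarrow> real) \<Rightarrow> real^'n \<Rightarrow> real^'n" where
  "newton_step G Gam Gs f x =
     (let \<beta> = newton_beta G Gs f x in
      \<chi> i. x $ i + \<beta> $ i - (1/2) * (\<Sum>j\<in>UNIV. \<Sum>k\<in>UNIV. Gam x j k i * \<beta> $ j * \<beta> $ k))"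

end

theory Submission imports Defs begin

lemma Ck_mono: "Ck_on (Suc k) h S \<Longrightarrow> Ck_on k h S"
proof (induction k arbitrary: h)
  case 0
  then show ?case by (simp add: differentiable_imp_continuous_on)
next
  case (Suc k)
  then show ?case by simp
qed

lemma Ck_mono_le: "Ck_on k h S \<Longrightarrow> m \<le> k \<Longrightarrow> Ck_on m h S"
proof (induction k)
  case 0
  then show ?case by simp
next
  case (Suc k)
  then show ?case by (metis Ck_mono le_Suc_eq)
qed

lemma Ck_cong: "open S \<Longrightarrow> (\<And>x. x\<in>S \<Longrightarrow> h x = g x) \<Longrightarrow> Ck_on k h S \<Longrightarrow> Ck_on k g S"
proof (induction k arbitrary: h g)
  case 0
  then show ?case using continuous_on_cong by force
next
  case (Suc k)
  have dh: "h differentiable_on S" using Suc by simp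
  have dg: "g differentiable_on S"
  proof -
    have "g differentiable at x" if "x \<in> S" for x
    proof -
      have "(h has_derivative frechet_derivative h (at x)) (at x)"
        using dh that Suc.prems(1) by (simp add: differentiable_on_eq_differentiable_at frechet_derivative_works)
      then have "(g has_derivative frechet_derivative h (at x)) (at x)"
        by (rule has_derivative_transform_within_open[OF _ Suc.prems(1) that Suc.prems(2)])
      then show ?thesis by (auto simp: differentiable_def)
    qed
    then show ?thesis using Suc.prems(1) by (simp add: differentiable_on_eq_differentiable_at)
  qed
  have eq: "frechet_derivative h (at x) v = frechet_derivative g (at x) v" if "x \<in> S" for x v
    using frechet_derivative_transform_within_open[of h x S g] dh Suc.prems(1,2) that
    by (simp add: differentiable_on_eq_differentiable_at)
  show ?case using Suc.IH[OF Suc.prems(1) eq] Suc.prems(3) dg by simp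
qed

lemma Ck_const: "Ck_on k (\<lambda>x. c) S"
  by (induction k arbitrary: c) auto

lemma Ck_add: "open S \<Longrightarrow> Ck_on k h S \<Longrightarrow> Ck_on k g S \<Longrightarrow> Ck_on k (\<lambda>x. h x + g x) S"
proof (induction k arbitrary: h g)
  case 0
  then show ?case by (simp add: continuous_on_add)
next
  case (Suc k)
  have dh: "h differentiable_on S" and dg: "g differentiable_on S" using Suc by auto
  have eq: "frechet_derivative h (at x) v + frechet_derivative g (at x) v
      = frechet_derivative (\<lambda>x. h x + g x) (at x) v" if "x \<in> S" for x v
  proof -
    have "h differentiable at x" "g differentiable at x"
      using dh dg that Suc.prems(1) by (auto simp: differentiable_on_eq_differentiable_at)
    then have "((\<lambda>x. h x + g x) has_derivative (\<lambda>v. frechet_derivative h (at x) v + frechet_derivative g (at x) v)) (at x)"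
      by (intro has_derivative_add) (auto simp: frechet_derivative_works)
    from frechet_derivative_at[OF this] show ?thesis by (rule fun_cong)
  qed
  have "Ck_on k (\<lambda>x. frechet_derivative (\<lambda>x. h x + g x) (at x) v) S" for v
  proof -
    have A: "Ck_on k (\<lambda>x. frechet_derivative h (at x) v + frechet_derivative g (at x) v) S"
      using Suc.prems by (intro Suc.IH) auto
    show ?thesis by (rule Ck_cong[OF Suc.prems(1) _ A]) (simp add: eq)
  qed
  then show ?case using dh dg by simp
qed

lemma Ck_mult: "open S \<Longrightarrow> Ck_on k h S \<Longrightarrow> Ck_on k g S \<Longrightarrow> Ck_on k (\<lambda>x. h x * g x) S"
proof (induction k arbitrary: h g)
  case 0
  then show ?case by (simp add: continuous_on_mult)
next
  case (Suc k)
  have dh: "h differentiable_on S" and dg: "g differentiable_on S" using Suc by auto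
  have eq: "h x * frechet_derivative g (at x) v + frechet_derivative h (at x) v * g x
      = frechet_derivative (\<lambda>x. h x * g x) (at x) v" if "x \<in> S" for x v
  proof -
    have "h differentiable at x" "g differentiable at x"
      using dh dg that Suc.prems(1) by (auto simp: differentiable_on_eq_differentiable_at)
    then have "((\<lambda>x. h x * g x) has_derivative (\<lambda>v. h x * frechet_derivative g (at x) v + frechet_derivative h (at x) v * g x)) (at x)"
      by (intro has_derivative_mult) (auto simp: frechet_derivative_works)
    from frechet_derivative_at[OF this] show ?thesis by (rule fun_cong)
  qed
  have "Ck_on k (\<lambda>x. h x * frechet_derivative g (at x) v + frechet_derivative h (at x) v * g x) S" for v
  proof -
    have "Ck_on k h S" "Ck_on k g S" using Suc.prems Ck_mono by blast+
    then show ?thesis using Suc.prems by (intro Ck_add Suc.IH) auto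
  qed
  note B = this
  have "Ck_on k (\<lambda>x. frechet_derivative (\<lambda>x. h x * g x) (at x) v) S" for v
    by (rule Ck_cong[OF Suc.prems(1) _ B]) (simp add: eq)
  then show ?case using dh dg by simp
qed

lemma Ck_uminus: assumes "open S" "Ck_on k h S" shows "Ck_on k (\<lambda>x. - h x) S"
proof -
  have "Ck_on k (\<lambda>x. (-1) * h x) S" by (rule Ck_mult[OF assms(1) Ck_const assms(2)])
  then show ?thesis by simp
qed

lemma Ck_inverse: "open S \<Longrightarrow> Ck_on k h S \<Longrightarrow> (\<And>x. x \<in> S \<Longrightarrow> h x \<noteq> 0) \<Longrightarrow> Ck_on k (\<lambda>x. inverse (h x)) S"
proof (induction k arbitrary: h)
  case 0
  then show ?case by (simp add: continuous_on_inverse)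
next
  case (Suc k)
  have dh: "h differentiable_on S" using Suc by auto
  have eq: "- (inverse (h x) * frechet_derivative h (at x) v * inverse (h x))
      = frechet_derivative (\<lambda>x. inverse (h x)) (at x) v" if "x \<in> S" for x v
  proof -
    have "h differentiable at x"
      using dh that Suc.prems(1) by (auto simp: differentiable_on_eq_differentiable_at)
    then have "((\<lambda>x. inverse (h x)) has_derivative (\<lambda>v. - (inverse (h x) * frechet_derivative h (at x) v * inverse (h x)))) (at x)"
      using Suc.prems(3)[OF that]
      by (intro Deriv.has_derivative_inverse) (auto simp: frechet_derivative_works)
    from frechet_derivative_at[OF this] show ?thesis by (rule fun_cong)
  qed
  have "Ck_on k (\<lambda>x. inverse (h x)) S" using Suc.prems Ck_mono[of k h S] by (intro Suc.IH) auto
  then have "Ck_on k (\<lambda>x. - (inverse (h x) * frechet_derivative h (at x) v * inverse (h x))) S" for v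
    using Suc.prems \<open>Ck_on k (\<lambda>x. inverse (h x)) S\<close>
    by (intro Ck_uminus Ck_mult) auto
  moreover have "(\<lambda>x. inverse (h x)) differentiable_on S"
    using dh Suc.prems(3) by (auto intro!: differentiable_on_inverse)
  moreover have "Ck_on k (\<lambda>x. frechet_derivative (\<lambda>x. inverse (h x)) (at x) v) S" for v
    by (rule Ck_cong[OF Suc.prems(1) _ calculation(1)]) (simp add: eq)
  ultimately show ?case by simp
qed

lemma Ck_sum: assumes "open S" "finite A" "\<And>i. i \<in> A \<Longrightarrow> Ck_on k (f i) S"
  shows "Ck_on k (\<lambda>x. \<Sum>i\<in>A. f i x) S"
  using assms(2,3)
proof (induction A rule: finite_induct)
  case empty
  then show ?case using Ck_const[of k 0 S] by simp
next
  case (insert a A)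
  then show ?case using Ck_add[OF assms(1), of k "f a" "\<lambda>x. \<Sum>i\<in>A. f i x"] by simp
qed

lemma Ck_prod: assumes "open S" "finite A" "\<And>i. i \<in> A \<Longrightarrow> Ck_on k (f i) S"
  shows "Ck_on k (\<lambda>x. \<Prod>i\<in>A. f i x) S"
  using assms(2,3)
proof (induction A rule: finite_induct)
  case empty
  then show ?case using Ck_const[of k 1 S] by simp
next
  case (insert a A)
  then show ?case using Ck_mult[OF assms(1), of k "f a" "\<lambda>x. \<Prod>i\<in>A. f i x"] by simp
qed

lemma Ck_det: assumes "open S" "\<And>i j. Ck_on k (\<lambda>x. M x $ i $ j) S"
  shows "Ck_on k (\<lambda>x. det (M x :: real^'n^'n)) S"
proof -
  have "Ck_on k (\<lambda>x. \<Sum>p\<in>{p. p permutes (UNIV::'n set)}. of_int (sign p) * (\<Prod>i\<in>UNIV. M x $ i $ p i)) S"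
    by (intro Ck_sum Ck_mult Ck_prod Ck_const assms) (auto simp: finite_permutations)
  then show ?thesis by (simp add: det_def)
qed

lemma matrix_inv_works:
  fixes A :: "real^'n^'n"
  assumes "invertible A"
  shows "A ** matrix_inv A = mat 1" "matrix_inv A ** A = mat 1"
proof -
  have "\<exists>A'. A ** A' = mat 1 \<and> A' ** A = mat 1" using assms by (simp add: invertible_def)
  then have "A ** matrix_inv A = mat 1 \<and> matrix_inv A ** A = mat 1"
    unfolding matrix_inv_def by (rule someI_ex)
  then show "A ** matrix_inv A = mat 1" "matrix_inv A ** A = mat 1" by auto
qed

lemma matrix_inv_solves:
  fixes A :: "real^'n^'n"
  assumes "invertible A"
  shows "A *v (matrix_inv A *v b) = b"
  by (simp add: matrix_vector_mul_assoc matrix_inv_works[OF assms])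

lemma invertible_iff_ker:
  fixes A :: "real^'n^'n"
  shows "invertible A \<longleftrightarrow> (\<forall>x. A *v x = 0 \<longrightarrow> x = 0)"
  by (simp add: invertible_left_inverse matrix_left_invertible_ker)

lemma Ck_partial: "Ck_on (Suc k) h S \<Longrightarrow> Ck_on k (partial i h) S"
  by (simp add: partial_def[abs_def])

lemma agrad_smooth:
  fixes G :: "real^'n \<Rightarrow> real^'n^'n"
  assumes S: "open S"
    and Gs: "\<And>i j. smooth_on (\<lambda>x. G x $ i $ j) S"
    and Ginv: "\<And>x. x \<in> S \<Longrightarrow> invertible (G x)"
    and fs: "smooth_on f S"
  shows "smooth_on (\<lambda>x. agrad G f x $ j) S"
  unfolding smooth_on_def
proof
  fix k
  define N where "N x = (\<chi> i l. if l = j then coord_grad f x $ i else G x $ i $ l)" for x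
  have eq: "det (N x) * inverse (det (G x)) = agrad G f x $ j" if "x \<in> S" for x
  proof -
    have d: "det (G x) \<noteq> 0" using Ginv[OF that] invertible_det_nz by blast
    have "G x *v agrad G f x = coord_grad f x"
      unfolding agrad_def by (rule matrix_inv_solves[OF Ginv[OF that]])
    then have "agrad G f x = (\<chi> k. det(\<chi> i l. if l=k then coord_grad f x$i else G x$i$l) / det (G x))"
      using cramer[OF d] by blast
    then show ?thesis by (simp add: N_def divide_inverse)
  qed
  have "Ck_on k (\<lambda>x. G x $ i $ l) S" for i l using Gs by (simp add: smooth_on_def)
  moreover have "Ck_on k (\<lambda>x. coord_grad f x $ i) S" for i
    using fs Ck_partial[of k f S i] by (simp add: smooth_on_def coord_grad_def)
  ultimately have "Ck_on k (\<lambda>x. N x $ i $ l) S" for i l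
    by (cases "l = j") (simp_all add: N_def)
  then have "Ck_on k (\<lambda>x. det (N x) * inverse (det (G x))) S"
    using Ginv invertible_det_nz
    by (intro Ck_mult Ck_inverse Ck_det S) (auto simp: smooth_on_def Gs[unfolded smooth_on_def])
  from Ck_cong[OF S _ this] show "Ck_on k (\<lambda>x. agrad G f x $ j) S"
    by (simp add: eq)
qed

lemma lin_repr:
  fixes L :: "real^'n \<Rightarrow> real"
  assumes "linear L"
  shows "L v = (\<Sum>l\<in>UNIV. v$l * L (axis l 1))"
proof -
  have "L v = L (\<Sum>l\<in>UNIV. v$l *\<^sub>R axis l 1)"
    using basis_expansion[of v] by (simp add: scalar_mult_eq_scaleR)
  also have "\<dots> = (\<Sum>l\<in>UNIV. v$l * L (axis l 1))"
    by (simp add: linear_sum[OF assms] linear_scale[OF assms])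
  finally show ?thesis .
qed

lemma lin_bound:
  fixes L :: "real^'n \<Rightarrow> real"
  assumes "linear L"
  shows "\<bar>L v\<bar> \<le> (\<Sum>l\<in>UNIV. \<bar>L (axis l 1)\<bar>) * norm v"
proof -
  have "\<bar>L v\<bar> \<le> (\<Sum>l\<in>UNIV. \<bar>v$l * L (axis l 1)\<bar>)"
    unfolding lin_repr[OF assms, of v] by (rule sum_abs)
  also have "\<dots> \<le> (\<Sum>l\<in>UNIV. \<bar>L (axis l 1)\<bar> * norm v)"
    by (rule sum_mono) (metis abs_ge_zero abs_mult component_le_norm_cart mult.commute mult_right_mono)
  finally show ?thesis by (simp add: sum_distrib_right)
qed

lemma onorm_lin_bound:
  fixes L :: "real^'n \<Rightarrow> real"
  assumes "linear L"
  shows "onorm L \<le> (\<Sum>l\<in>UNIV. \<bar>L (axis l 1)\<bar>)"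
  by (rule onorm_le) (simp add: lin_bound[OF assms])

lemma cont_bound:
  fixes F :: "real^'n \<Rightarrow> real"
  assumes "continuous_on K F" "compact K"
  shows "\<exists>B. \<forall>y\<in>K. \<bar>F y\<bar> \<le> B"
proof -
  have "bounded (F ` K)" using compact_continuous_image[OF assms(1,2)] compact_imp_bounded by blast
  then show ?thesis unfolding bounded_iff by auto
qed

lemma hd_within: "f differentiable at x \<Longrightarrow> (f has_derivative frechet_derivative f (at x)) (at x within T)"
  by (rule has_derivative_subset[of _ _ _ UNIV]) (auto simp: frechet_derivative_works)

lemma taylor2:
  fixes h :: "real^'n \<Rightarrow> real"
  assumes S: "open S" and h: "Ck_on 2 h S" and x0: "x0 \<in> S"
  shows "\<exists>r>0. \<exists>C. cball x0 r \<subseteq> S \<and> (\<forall>x\<in>cball x0 r.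
     \<bar>h x - h x0\<bar> \<le> C * norm (x - x0) \<and>
     \<bar>h x0 - h x - (\<Sum>i\<in>UNIV. partial i h x * (x0 - x)$i)\<bar> \<le> C * (norm (x - x0))\<^sup>2)"
proof -
  obtain r where r: "r > 0" "cball x0 r \<subseteq> S" using S x0 open_contains_cball by blast
  define g where "g = (\<lambda>i. partial i h)"
  have h2: "Ck_on (Suc (Suc 0)) h S" using h by (simp only: numeral_2_eq_2)
  have hd: "h differentiable_on S" using h2 by (simp only: Ck_on.simps)
  have hdat: "h differentiable at y" if "y \<in> S" for y
    using hd S that by (simp add: differentiable_on_eq_differentiable_at)
  have g1: "Ck_on (Suc 0) (g i) S" for i
    unfolding g_def by (rule Ck_partial[OF h2])
  have gd: "g i differentiable at y" if "y \<in> S" for i y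
  proof -
    have "g i differentiable_on S" using g1[of i] by (simp only: Ck_on.simps)
    then show ?thesis using S that by (simp add: differentiable_on_eq_differentiable_at)
  qed
  have gc: "continuous_on S (g i)" for i
    using Ck_mono[OF g1[of i]] by (simp only: Ck_on.simps)
  have g2c: "continuous_on S (\<lambda>y. frechet_derivative (g i) (at y) v)" for i v
    using g1[of i] by (simp only: Ck_on.simps)
  have Dh: "frechet_derivative h (at y) v = (\<Sum>l\<in>UNIV. v$l * g l y)" if "y \<in> S" for y v
    using lin_repr[OF linear_frechet_derivative[OF hdat[OF that]], of v] by (simp add: g_def partial_def)
  define F1 where "F1 y = (\<Sum>i\<in>UNIV. \<bar>g i y\<bar>)" for y
  define F2 where "F2 y = (\<Sum>i\<in>UNIV. \<Sum>l\<in>UNIV. \<bar>frechet_derivative (g i) (at y) (axis l 1)\<bar>)" for y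
  have c1: "continuous_on (cball x0 r) F1"
    unfolding F1_def by (intro continuous_on_sum continuous_on_rabs continuous_on_subset[OF gc r(2)])
  obtain B1 where B1: "\<And>y. y \<in> cball x0 r \<Longrightarrow> \<bar>F1 y\<bar> \<le> B1"
    using cont_bound[OF c1 compact_cball] by blast
  have c2: "continuous_on (cball x0 r) F2"
    unfolding F2_def by (intro continuous_on_sum continuous_on_rabs continuous_on_subset[OF g2c r(2)])
  obtain B2 where B2: "\<And>y. y \<in> cball x0 r \<Longrightarrow> \<bar>F2 y\<bar> \<le> B2"
    using cont_bound[OF c2 compact_cball] by blast
  have F2i: "(\<Sum>l\<in>UNIV. \<bar>frechet_derivative (g i) (at y) (axis l 1)\<bar>) \<le> F2 y" for i y
    unfolding F2_def by (rule member_le_sum) (simp_all add: sum_nonneg)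
  have glip: "\<bar>g i y - g i z\<bar> \<le> B2 * norm (y - z)" if "y \<in> cball x0 r" "z \<in> cball x0 r" for i y z
  proof -
    have "norm (g i y - g i z) \<le> B2 * norm (y - z)"
    proof (rule differentiable_bound[OF convex_cball _ _ that])
      fix w assume w: "w \<in> cball x0 r"
      show "(g i has_derivative frechet_derivative (g i) (at w)) (at w within cball x0 r)"
        using gd[of w i] w r(2) by (intro hd_within) auto
      show "onorm (frechet_derivative (g i) (at w)) \<le> B2"
        using onorm_lin_bound[OF linear_frechet_derivative[OF gd[of w i]]] F2i[of i w] B2[OF w] w r(2)
        by auto
    qed
    then show ?thesis by simp
  qed
  have seg: "closed_segment x x0 \<subseteq> cball x0 r" if "x \<in> cball x0 r" for x
    using that r(1) by (intro closed_segment_subset convex_cball) auto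
  define C where "C = max B1 (real CARD('n) * B2)"
  have main: "\<bar>h x - h x0\<bar> \<le> C * norm (x - x0) \<and>
     \<bar>h x0 - h x - (\<Sum>i\<in>UNIV. partial i h x * (x0 - x)$i)\<bar> \<le> C * (norm (x - x0))\<^sup>2"
    if x: "x \<in> cball x0 r" for x
  proof -
    have "norm (h x - h x0) \<le> B1 * norm (x - x0)"
    proof (rule differentiable_bound[OF convex_cball _ _ x centre_in_cball[THEN iffD2]])
      show "0 \<le> r" using r by simp
      fix w assume w: "w \<in> cball x0 r"
      show "(h has_derivative frechet_derivative h (at w)) (at w within cball x0 r)"
        using hdat[of w] w r(2) by (intro hd_within) auto
      have "onorm (frechet_derivative h (at w)) \<le> (\<Sum>l\<in>UNIV. \<bar>frechet_derivative h (at w) (axis l 1)\<bar>)"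
        using onorm_lin_bound[OF linear_frechet_derivative[OF hdat[of w]]] w r(2) by auto
      also have "\<dots> = F1 w" by (simp add: F1_def g_def partial_def[abs_def])
      also have "\<dots> \<le> B1" using B1[OF w] by simp
      finally show "onorm (frechet_derivative h (at w)) \<le> B1" .
    qed
    then have A: "\<bar>h x - h x0\<bar> \<le> C * norm (x - x0)"
      by (smt (verit) C_def mult_right_mono norm_ge_zero real_norm_def)
    have "norm (h x0 - h x - frechet_derivative h (at x) (x0 - x)) \<le> norm (x0 - x) * (real CARD('n) * B2 * norm (x - x0))"
    proof (rule differentiable_bound_linearization[of x x0 "closed_segment x x0"])
      show "x + t *\<^sub>R (x0 - x) \<in> closed_segment x x0" if "t \<in> {0..1}" for t
        using that by (auto simp: closed_segment_def algebra_simps intro!: exI[of _ t])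
      fix w assume w: "w \<in> closed_segment x x0"
      then have wc: "w \<in> cball x0 r" using seg[OF x] by auto
      show "(h has_derivative frechet_derivative h (at w)) (at w within closed_segment x x0)"
        using hdat[of w] wc r(2) by (intro hd_within) auto
      have lin: "linear (\<lambda>v. frechet_derivative h (at w) v - frechet_derivative h (at x) v)"
        using hdat[of w] hdat[of x] wc x r(2)
        by (intro linear_compose_sub linear_frechet_derivative) auto
      have "onorm (frechet_derivative h (at w) - frechet_derivative h (at x))
          \<le> (\<Sum>l\<in>UNIV. \<bar>frechet_derivative h (at w) (axis l 1) - frechet_derivative h (at x) (axis l 1)\<bar>)"
        using onorm_lin_bound[OF lin] by (simp add: fun_diff_def)
      also have "\<dots> = (\<Sum>l\<in>UNIV. \<bar>g l w - g l x\<bar>)" by (simp add: g_def partial_def[abs_def])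
      also have "\<dots> \<le> (\<Sum>l\<in>(UNIV::'n set). B2 * norm (w - x))"
        by (rule sum_mono) (rule glip[OF wc x])
      also have "\<dots> \<le> (\<Sum>l\<in>(UNIV::'n set). B2 * norm (x - x0))"
      proof (rule sum_mono)
        fix l
        have "norm (w - x) \<le> norm (x0 - x)" using w
          by (metis dist_commute dist_in_closed_segment dist_norm)
        moreover have "B2 \<ge> 0" using B2[OF wc] by simp
        ultimately show "B2 * norm (w - x) \<le> B2 * norm (x - x0)"
          by (simp add: mult_left_mono norm_minus_commute)
      qed
      also have "\<dots> = real CARD('n) * B2 * norm (x - x0)" by simp
      finally show "onorm (frechet_derivative h (at w) - frechet_derivative h (at x)) \<le> real CARD('n) * B2 * norm (x - x0)" .
    qed simp
    moreover have "frechet_derivative h (at x) (x0 - x) = (\<Sum>i\<in>UNIV. partial i h x * (x0 - x)$i)"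
      using Dh[of x "x0 - x"] x r(2) by (auto simp: g_def mult.commute)
    ultimately have "\<bar>h x0 - h x - (\<Sum>i\<in>UNIV. partial i h x * (x0 - x)$i)\<bar> \<le> real CARD('n) * B2 * (norm (x - x0))\<^sup>2"
      by (simp add: norm_minus_commute power2_eq_square algebra_simps)
    also have "\<dots> \<le> C * (norm (x - x0))\<^sup>2"
      by (intro mult_right_mono) (auto simp: C_def)
    finally show ?thesis using A by blast
  qed
  show ?thesis using r main by blast
qed

lemma taylor2_vec:
  fixes F :: "real^'n \<Rightarrow> real^'n"
  assumes S: "open S" and h: "\<And>j. Ck_on 2 (\<lambda>x. F x $ j) S" and x0: "x0 \<in> S"
  shows "\<exists>r>0. \<exists>C. cball x0 r \<subseteq> S \<and> (\<forall>x\<in>cball x0 r. \<forall>j.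
     \<bar>F x $ j - F x0 $ j\<bar> \<le> C * norm (x - x0) \<and>
     \<bar>F x0 $ j - F x $ j - (\<Sum>i\<in>UNIV. partial i (\<lambda>y. F y $ j) x * (x0 - x)$i)\<bar> \<le> C * (norm (x - x0))\<^sup>2)"
proof -
  have "\<forall>j. \<exists>r. r > 0 \<and> (\<exists>C. cball x0 r \<subseteq> S \<and> (\<forall>x\<in>cball x0 r.
     \<bar>F x $ j - F x0 $ j\<bar> \<le> C * norm (x - x0) \<and>
     \<bar>F x0 $ j - F x $ j - (\<Sum>i\<in>UNIV. partial i (\<lambda>y. F y $ j) x * (x0 - x)$i)\<bar> \<le> C * (norm (x - x0))\<^sup>2))"
    by (intro allI) (rule taylor2[OF S h x0])
  then obtain rf where rf: "\<And>j. rf j > 0 \<and> (\<exists>C. cball x0 (rf j) \<subseteq> S \<and> (\<forall>x\<in>cball x0 (rf j).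
     \<bar>F x $ j - F x0 $ j\<bar> \<le> C * norm (x - x0) \<and>
     \<bar>F x0 $ j - F x $ j - (\<Sum>i\<in>UNIV. partial i (\<lambda>y. F y $ j) x * (x0 - x)$i)\<bar> \<le> C * (norm (x - x0))\<^sup>2))"
    using choice[of "\<lambda>j r. r > 0 \<and> (\<exists>C. cball x0 r \<subseteq> S \<and> (\<forall>x\<in>cball x0 r.
     \<bar>F x $ j - F x0 $ j\<bar> \<le> C * norm (x - x0) \<and>
     \<bar>F x0 $ j - F x $ j - (\<Sum>i\<in>UNIV. partial i (\<lambda>y. F y $ j) x * (x0 - x)$i)\<bar> \<le> C * (norm (x - x0))\<^sup>2))"] by blast
  then have "\<forall>j. \<exists>C. cball x0 (rf j) \<subseteq> S \<and> (\<forall>x\<in>cball x0 (rf j).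
     \<bar>F x $ j - F x0 $ j\<bar> \<le> C * norm (x - x0) \<and>
     \<bar>F x0 $ j - F x $ j - (\<Sum>i\<in>UNIV. partial i (\<lambda>y. F y $ j) x * (x0 - x)$i)\<bar> \<le> C * (norm (x - x0))\<^sup>2)"
    by blast
  then obtain Cf where Cf: "\<And>j. cball x0 (rf j) \<subseteq> S \<and> (\<forall>x\<in>cball x0 (rf j).
     \<bar>F x $ j - F x0 $ j\<bar> \<le> Cf j * norm (x - x0) \<and>
     \<bar>F x0 $ j - F x $ j - (\<Sum>i\<in>UNIV. partial i (\<lambda>y. F y $ j) x * (x0 - x)$i)\<bar> \<le> Cf j * (norm (x - x0))\<^sup>2)"
    using choice[of "\<lambda>j C. cball x0 (rf j) \<subseteq> S \<and> (\<forall>x\<in>cball x0 (rf j).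
     \<bar>F x $ j - F x0 $ j\<bar> \<le> C * norm (x - x0) \<and>
     \<bar>F x0 $ j - F x $ j - (\<Sum>i\<in>UNIV. partial i (\<lambda>y. F y $ j) x * (x0 - x)$i)\<bar> \<le> C * (norm (x - x0))\<^sup>2)"] by blast
  have rC: "\<And>j. rf j > 0" "\<And>j. cball x0 (rf j) \<subseteq> S"
     "\<And>j x. x \<in> cball x0 (rf j) \<Longrightarrow> \<bar>F x $ j - F x0 $ j\<bar> \<le> Cf j * norm (x - x0) \<and>
     \<bar>F x0 $ j - F x $ j - (\<Sum>i\<in>UNIV. partial i (\<lambda>y. F y $ j) x * (x0 - x)$i)\<bar> \<le> Cf j * (norm (x - x0))\<^sup>2"
    using rf Cf by blast+
  define r where "r = Min (range rf)"
  define C where "C = (\<Sum>j\<in>UNIV. \<bar>Cf j\<bar>)"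
  have rpos: "r > 0" unfolding r_def using rC(1) by (subst Min_gr_iff) auto
  have rle: "r \<le> rf j" for j unfolding r_def by (rule Min_le) auto
  have Cle: "Cf j \<le> C" for j
  proof -
    have "\<bar>Cf j\<bar> \<le> C" unfolding C_def by (rule member_le_sum) auto
    then show ?thesis by simp
  qed
  have sub: "cball x0 r \<subseteq> cball x0 (rf j)" for j using rle[of j] by (auto simp: subset_eq)
  have main: "\<bar>F x $ j - F x0 $ j\<bar> \<le> C * norm (x - x0) \<and>
     \<bar>F x0 $ j - F x $ j - (\<Sum>i\<in>UNIV. partial i (\<lambda>y. F y $ j) x * (x0 - x)$i)\<bar> \<le> C * (norm (x - x0))\<^sup>2"
    if x: "x \<in> cball x0 r" for x j
  proof -
    have xj: "x \<in> cball x0 (rf j)" using sub x by blast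
    have "Cf j * norm (x - x0) \<le> C * norm (x - x0)" by (rule mult_right_mono[OF Cle]) simp
    moreover have "Cf j * (norm (x - x0))\<^sup>2 \<le> C * (norm (x - x0))\<^sup>2" by (rule mult_right_mono[OF Cle]) simp
    ultimately show ?thesis using rC(3)[OF xj] by linarith
  qed
  have "cball x0 r \<subseteq> S" using sub rC(2) by blast
  then show ?thesis using rpos main by blast
qed

definition mb :: "real^'n^'m \<Rightarrow> real" where
  "mb A = (\<Sum>i\<in>UNIV. \<Sum>j\<in>UNIV. \<bar>A $ i $ j\<bar>)"

lemma mb_bound: "norm (A *v x) \<le> mb A * norm x"
proof -
  have "norm (A *v x) \<le> (\<Sum>i\<in>UNIV. \<bar>(A *v x) $ i\<bar>)"
    by (rule norm_le_l1_cart)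
  also have "\<dots> \<le> (\<Sum>i\<in>UNIV. \<Sum>j\<in>UNIV. \<bar>A $ i $ j\<bar> * norm x)"
  proof (rule sum_mono)
    fix i
    have "\<bar>(A *v x) $ i\<bar> \<le> \<bar>\<Sum>j\<in>UNIV. A $ i $ j * x $ j\<bar>"
      by (simp add: matrix_vector_mult_def)
    also have "\<dots> \<le> (\<Sum>j\<in>UNIV. \<bar>A $ i $ j * x $ j\<bar>)"
      by (rule sum_abs)
    also have "\<dots> \<le> (\<Sum>j\<in>UNIV. \<bar>A $ i $ j\<bar> * norm x)"
      by (rule sum_mono) (simp add: abs_mult component_le_norm_cart mult_left_mono)
    finally show "\<bar>(A *v x) $ i\<bar> \<le> (\<Sum>j\<in>UNIV. \<bar>A $ i $ j\<bar> * norm x)" .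
  qed
  finally show ?thesis
    by (simp add: mb_def sum_distrib_right)
qed

lemma bilin_bound:
  fixes u w :: "real^'n"
  shows "\<bar>\<Sum>i\<in>UNIV. \<Sum>k\<in>UNIV. c i k * u $ i * w $ k\<bar> \<le> (\<Sum>i\<in>UNIV. \<Sum>k\<in>UNIV. \<bar>c i k\<bar>) * (norm u * norm w)"
proof -
  have "\<bar>\<Sum>i\<in>UNIV. \<Sum>k\<in>UNIV. c i k * u $ i * w $ k\<bar> \<le> (\<Sum>i\<in>UNIV. \<bar>\<Sum>k\<in>UNIV. c i k * u $ i * w $ k\<bar>)"
    by (rule sum_abs)
  also have "\<dots> \<le> (\<Sum>i\<in>UNIV. \<Sum>k\<in>UNIV. \<bar>c i k\<bar> * (norm u * norm w))"
  proof (rule sum_mono)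
    fix i
    have "\<bar>\<Sum>k\<in>UNIV. c i k * u $ i * w $ k\<bar> \<le> (\<Sum>k\<in>UNIV. \<bar>c i k * u $ i * w $ k\<bar>)"
      by (rule sum_abs)
    also have "\<dots> \<le> (\<Sum>k\<in>UNIV. \<bar>c i k\<bar> * (norm u * norm w))"
    proof (rule sum_mono)
      fix k
      have "\<bar>u $ i\<bar> * \<bar>w $ k\<bar> \<le> norm u * norm w"
        by (intro mult_mono component_le_norm_cart) auto
      then show "\<bar>c i k * u $ i * w $ k\<bar> \<le> \<bar>c i k\<bar> * (norm u * norm w)"
        by (simp add: abs_mult mult_left_mono mult.assoc)
    qed
    finally show "\<bar>\<Sum>k\<in>UNIV. c i k * u $ i * w $ k\<bar> \<le> (\<Sum>k\<in>UNIV. \<bar>c i k\<bar> * (norm u * norm w))" .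
  qed
  also have "\<dots> = (\<Sum>i\<in>UNIV. \<Sum>k\<in>UNIV. \<bar>c i k\<bar>) * (norm u * norm w)"
    by (simp add: sum_distrib_right)
  finally show ?thesis .
qed

lemma newton_est:
  fixes M :: "real^'n^'n" and a e \<beta> q :: "real^'n"
  assumes lower: "\<And>v. norm v \<le> B * norm (M *v v)"
    and Mb: "M *v \<beta> = - a"
    and res: "norm (M *v e - a) \<le> K1 * (norm e)\<^sup>2"
    and na: "norm a \<le> Ka * norm e"
    and qb: "norm q \<le> Kq * (norm \<beta>)\<^sup>2"
    and B: "B \<ge> 0" and Kq: "Kq \<ge> 0"
  shows "norm (e + \<beta> - q) \<le> (B * K1 + Kq * (B * Ka)\<^sup>2) * (norm e)\<^sup>2"
proof -
  have "M *v (e + \<beta>) = M *v e - a" using Mb by (simp add: matrix_vector_right_distrib)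
  then have 1: "norm (e + \<beta>) \<le> B * (K1 * (norm e)\<^sup>2)"
    using lower[of "e + \<beta>"] res B by (metis mult_left_mono order_trans)
  have "norm \<beta> \<le> B * norm a" using lower[of \<beta>] Mb by simp
  also have "\<dots> \<le> B * (Ka * norm e)" using na B by (rule mult_left_mono)
  finally have 2: "norm \<beta> \<le> B * Ka * norm e" by simp
  have "(norm \<beta>)\<^sup>2 \<le> (B * Ka * norm e)\<^sup>2" using 2 by (intro power_mono) auto
  then have 3: "norm q \<le> Kq * (B * Ka * norm e)\<^sup>2" using qb Kq by (metis mult_left_mono order_trans)
  have "norm (e + \<beta> - q) \<le> norm (e + \<beta>) + norm q" by (rule norm_triangle_ineq4)
  also have "\<dots> \<le> B * (K1 * (norm e)\<^sup>2) + Kq * (B * Ka * norm e)\<^sup>2" using 1 3 by simp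
  also have "\<dots> = (B * K1 + Kq * (B * Ka)\<^sup>2) * (norm e)\<^sup>2" by (simp add: algebra_simps power_mult_distrib)
  finally show ?thesis .
qed

theorem theorem3:
  fixes \<Omega> :: "(real^'n) set"
    and G :: "real^'n \<Rightarrow> real^'n^'n"
    and Gam Gs :: "real^'n \<Rightarrow> 'n \<Rightarrow> 'n \<Rightarrow> 'n \<Rightarrow> real"
    and f :: "real^'n \<Rightarrow> real"
    and \<xi>s :: "real^'n"
  assumes chart: "open \<Omega>"
    and G_smooth: "\<And>i j. smooth_on (\<lambda>x. G x $ i $ j) \<Omega>"
    and G_sym: "\<And>x i j. x \<in> \<Omega> \<Longrightarrow> G x $ i $ j = G x $ j $ i"
    and G_pos: "\<And>x v. x \<in> \<Omega> \<Longrightarrow> v \<noteq> 0 \<Longrightarrow> v \<bullet> (G x *v v) > 0"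
    and Gam_smooth: "\<And>i j k. smooth_on (\<lambda>x. Gam x i j k) \<Omega>"
    and Gs_smooth: "\<And>i j k. smooth_on (\<lambda>x. Gs x i j k) \<Omega>"
    and Gam_torsion_free: "\<And>x i j k. x \<in> \<Omega> \<Longrightarrow> Gam x i j k = Gam x j i k"
    and Gs_torsion_free: "\<And>x i j k. x \<in> \<Omega> \<Longrightarrow> Gs x i j k = Gs x j i k"
    and dual: "\<And>x i j k. x \<in> \<Omega> \<Longrightarrow>
        partial i (\<lambda>y. G y $ j $ k) x
          = (\<Sum>l\<in>UNIV. Gam x i j l * G x $ l $ k) + (\<Sum>l\<in>UNIV. Gs x i k l * G x $ j $ l)"
    and f_smooth: "smooth_on f \<Omega>"
    and xs_in: "\<xi>s \<in> \<Omega>"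
    and crit: "agrad G f \<xi>s = 0"
    and Hess_pos: "\<And>X. X \<noteq> 0 \<Longrightarrow>
        (transpose (Hstar G Gs f \<xi>s) *v X) \<bullet> (G \<xi>s *v X) > 0"
  shows "\<exists>U. open U \<and> \<xi>s \<in> U \<and> U \<subseteq> \<Omega> \<and>
           (\<forall>\<xi>0\<in>U.
              (\<forall>k. (newton_step G Gam Gs f ^^ k) \<xi>0 \<in> \<Omega> \<and>
                   invertible (transpose (Hstar G Gs f ((newton_step G Gam Gs f ^^ k) \<xi>0)))) \<and>
              (\<lambda>k. (newton_step G Gam Gs f ^^ k) \<xi>0) \<longlonglongrightarrow> \<xi>s \<and>
              (\<exists>C. \<forall>k. norm ((newton_step G Gam Gs f ^^ Suc k) \<xi>0 - \<xi>s)
                        \<le> C * (norm ((newton_step G Gam Gs f ^^ k) \<xi>0 - \<xi>s))\<^sup>2))"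
proof -
  define a where "a = agrad G f"
  define M where "M x = transpose (Hstar G Gs f x)" for x
  define N where "N = newton_step G Gam Gs f"
  let ?n = "real CARD('n)"
  have Ginv: "invertible (G x)" if x: "x \<in> \<Omega>" for x
    unfolding invertible_iff_ker
  proof (intro allI impI)
    fix v assume "G x *v v = 0"
    then show "v = 0" using G_pos[OF x, of v] by (cases "v = 0") auto
  qed
  have asm: "smooth_on (\<lambda>x. a x $ j) \<Omega>" for j
    unfolding a_def by (rule agrad_smooth[OF chart G_smooth Ginv f_smooth])
  have a2: "Ck_on 2 (\<lambda>x. a x $ j) \<Omega>" for j using asm[of j] unfolding smooth_on_def by blast
  have a_cont: "continuous_on \<Omega> (\<lambda>x. a x $ j)" for j
  proof -
    have "Ck_on 0 (\<lambda>x. a x $ j) \<Omega>" using asm[of j] unfolding smooth_on_def by blast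
    then show ?thesis by (simp only: Ck_on.simps)
  qed
  have da_cont: "continuous_on \<Omega> (partial i (\<lambda>y. a y $ j))" for i j
  proof -
    have "Ck_on (Suc 0) (\<lambda>x. a x $ j) \<Omega>" using asm[of j] unfolding smooth_on_def by blast
    from Ck_partial[OF this, of i] show ?thesis by (simp only: Ck_on.simps)
  qed
  have Gs_cont: "continuous_on \<Omega> (\<lambda>x. Gs x i k j)" for i k j
  proof -
    have "Ck_on 0 (\<lambda>x. Gs x i k j) \<Omega>" using Gs_smooth[of i k j] unfolding smooth_on_def by blast
    then show ?thesis by (simp only: Ck_on.simps)
  qed
  have Gam_cont: "continuous_on \<Omega> (\<lambda>x. Gam x i k j)" for i k j
  proof -
    have "Ck_on 0 (\<lambda>x. Gam x i k j) \<Omega>" using Gam_smooth[of i k j] unfolding smooth_on_def by blast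
    then show ?thesis by (simp only: Ck_on.simps)
  qed
  have Mcomp: "M x $ j $ i = partial i (\<lambda>y. a y $ j) x + (\<Sum>k\<in>UNIV. a x $ k * Gs x i k j)" for x i j
    by (simp add: M_def Hstar_def transpose_def a_def)
  have M0inv: "invertible (M \<xi>s)"
    unfolding invertible_iff_ker
  proof (intro allI impI)
    fix X assume "M \<xi>s *v X = 0"
    then show "X = 0" using Hess_pos[of X] by (cases "X = 0") (auto simp: M_def)
  qed
  define B0 where "B0 = mb (matrix_inv (M \<xi>s)) + 1"
  have mb_nonneg: "mb A \<ge> 0" for A :: "real^'n^'n" unfolding mb_def by (intro sum_nonneg) auto
  have B0pos: "B0 > 0" unfolding B0_def using mb_nonneg[of "matrix_inv (M \<xi>s)"] by linarith
  have low0: "norm v \<le> B0 * norm (M \<xi>s *v v)" for v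
  proof -
    have "v = matrix_inv (M \<xi>s) *v (M \<xi>s *v v)"
      by (simp add: matrix_vector_mul_assoc matrix_inv_works(2)[OF M0inv])
    then have "norm v \<le> mb (matrix_inv (M \<xi>s)) * norm (M \<xi>s *v v)" by (metis mb_bound)
    also have "\<dots> \<le> B0 * norm (M \<xi>s *v v)" unfolding B0_def by (intro mult_right_mono) auto
    finally show ?thesis .
  qed
  have phi_eq: "(\<lambda>x. mb (M x - M \<xi>s)) = (\<lambda>x. \<Sum>j\<in>UNIV. \<Sum>i\<in>UNIV.
      \<bar>(partial i (\<lambda>y. a y $ j) x + (\<Sum>k\<in>UNIV. a x $ k * Gs x i k j)) - M \<xi>s $ j $ i\<bar>)"
    by (rule ext) (simp add: mb_def Mcomp[of _ j i for j i])
  have phi_cont: "continuous_on \<Omega> (\<lambda>x. mb (M x - M \<xi>s))"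
    unfolding phi_eq
    by (intro continuous_on_sum continuous_on_rabs continuous_on_diff continuous_on_add
        continuous_on_mult continuous_on_const da_cont a_cont Gs_cont)
  have "isCont (\<lambda>x. mb (M x - M \<xi>s)) \<xi>s"
    using phi_cont chart xs_in continuous_on_eq_continuous_at by blast
  then have "\<forall>r>0. \<exists>s>0. \<forall>x. x \<noteq> \<xi>s \<and> norm (x - \<xi>s) < s \<longrightarrow> norm (mb (M x - M \<xi>s) - mb (M \<xi>s - M \<xi>s)) < r"
    unfolding isCont_def LIM_eq .
  moreover have "1 / (2 * B0) > 0" using B0pos by simp
  ultimately obtain \<delta> where \<delta>: "\<delta> > 0" "\<And>x. x \<noteq> \<xi>s \<Longrightarrow> norm (x - \<xi>s) < \<delta> \<Longrightarrow> norm (mb (M x - M \<xi>s) - mb (M \<xi>s - M \<xi>s)) < 1 / (2 * B0)"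
    by blast
  have mb0: "mb (0 :: real^'n^'n) = 0" by (simp add: mb_def)
  have phi_small: "mb (M x - M \<xi>s) < 1 / (2 * B0)" if "norm (x - \<xi>s) < \<delta>" for x
  proof (cases "x = \<xi>s")
    case True then show ?thesis using B0pos mb0 by simp
  next
    case False then show ?thesis using \<delta>(2)[OF False that] mb0 mb_nonneg[of "M x - M \<xi>s"] by simp
  qed
  have a0: "a \<xi>s = 0" using crit by (simp add: a_def)
  obtain r1 C1 where r1: "r1 > 0" "cball \<xi>s r1 \<subseteq> \<Omega>"
    and C1: "\<And>x j. x \<in> cball \<xi>s r1 \<Longrightarrow> \<bar>a x $ j - a \<xi>s $ j\<bar> \<le> C1 * norm (x - \<xi>s) \<and>
     \<bar>a \<xi>s $ j - a x $ j - (\<Sum>i\<in>UNIV. partial i (\<lambda>y. a y $ j) x * (\<xi>s - x)$i)\<bar> \<le> C1 * (norm (x - \<xi>s))\<^sup>2"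
    using taylor2_vec[OF chart a2 xs_in] by blast
  define Cp where "Cp = \<bar>C1\<bar>"
  have Cp: "\<bar>a x $ j\<bar> \<le> Cp * norm (x - \<xi>s)"
     "\<bar>(\<Sum>i\<in>UNIV. partial i (\<lambda>y. a y $ j) x * (x - \<xi>s)$i) - a x $ j\<bar> \<le> Cp * (norm (x - \<xi>s))\<^sup>2"
    if x: "x \<in> cball \<xi>s r1" for x j
  proof -
    have "C1 * norm (x - \<xi>s) \<le> Cp * norm (x - \<xi>s)" unfolding Cp_def by (intro mult_right_mono) auto
    moreover have "C1 * (norm (x - \<xi>s))\<^sup>2 \<le> Cp * (norm (x - \<xi>s))\<^sup>2" unfolding Cp_def by (intro mult_right_mono) auto
    moreover have "(\<Sum>i\<in>UNIV. partial i (\<lambda>y. a y $ j) x * (\<xi>s - x)$i) = - (\<Sum>i\<in>UNIV. partial i (\<lambda>y. a y $ j) x * (x - \<xi>s)$i)"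
      by (simp add: sum_negf[symmetric] algebra_simps)
    ultimately show "\<bar>a x $ j\<bar> \<le> Cp * norm (x - \<xi>s)"
     "\<bar>(\<Sum>i\<in>UNIV. partial i (\<lambda>y. a y $ j) x * (x - \<xi>s)$i) - a x $ j\<bar> \<le> Cp * (norm (x - \<xi>s))\<^sup>2"
      using C1[OF x, of j] a0 by auto
  qed
  have cG: "continuous_on (cball \<xi>s r1) (\<lambda>x. \<Sum>i\<in>UNIV. \<Sum>j\<in>UNIV. \<Sum>k\<in>UNIV. \<bar>Gam x j k i\<bar>)"
    by (intro continuous_on_sum continuous_on_rabs continuous_on_subset[OF Gam_cont r1(2)])
  obtain KG0 where KG0: "\<And>x. x \<in> cball \<xi>s r1 \<Longrightarrow> \<bar>\<Sum>i\<in>UNIV. \<Sum>j\<in>UNIV. \<Sum>k\<in>UNIV. \<bar>Gam x j k i\<bar>\<bar> \<le> KG0"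
    using cont_bound[OF cG compact_cball] by blast
  have cS: "continuous_on (cball \<xi>s r1) (\<lambda>x. \<Sum>j\<in>UNIV. \<Sum>i\<in>UNIV. \<Sum>k\<in>UNIV. \<bar>Gs x i k j\<bar>)"
    by (intro continuous_on_sum continuous_on_rabs continuous_on_subset[OF Gs_cont r1(2)])
  obtain KS0 where KS0: "\<And>x. x \<in> cball \<xi>s r1 \<Longrightarrow> \<bar>\<Sum>j\<in>UNIV. \<Sum>i\<in>UNIV. \<Sum>k\<in>UNIV. \<bar>Gs x i k j\<bar>\<bar> \<le> KS0"
    using cont_bound[OF cS compact_cball] by blast
  define KG where "KG = \<bar>KG0\<bar>"
  define KS where "KS = \<bar>KS0\<bar>"
  have KG: "(\<Sum>i\<in>UNIV. \<Sum>j\<in>UNIV. \<Sum>k\<in>UNIV. \<bar>Gam x j k i\<bar>) \<le> KG" if "x \<in> cball \<xi>s r1" for x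
    using KG0[OF that] unfolding KG_def by linarith
  have KS: "(\<Sum>j\<in>UNIV. \<Sum>i\<in>UNIV. \<Sum>k\<in>UNIV. \<bar>Gs x i k j\<bar>) \<le> KS" if "x \<in> cball \<xi>s r1" for x
    using KS0[OF that] unfolding KS_def by linarith
  define Ka where "Ka = ?n * Cp"
  define K1 where "K1 = ?n * Cp + Ka * KS"
  define Kq where "Kq = KG / 2"
  define Cfin where "Cfin = (2 * B0) * K1 + Kq * ((2 * B0) * Ka)\<^sup>2"
  define r where "r = min r1 \<delta>"
  have rpos: "r > 0" using r1 \<delta> by (simp add: r_def)
  have step: "x \<in> \<Omega> \<and> invertible (M x) \<and> norm (N x - \<xi>s) \<le> Cfin * (norm (x - \<xi>s))\<^sup>2"
    if x: "norm (x - \<xi>s) < r" for x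
  proof -
    define e where "e = x - \<xi>s"
    have xc: "x \<in> cball \<xi>s r1" using x by (simp add: r_def dist_norm norm_minus_commute)
    have xO: "x \<in> \<Omega>" using xc r1(2) by blast
    have ph: "mb (M x - M \<xi>s) < 1 / (2 * B0)" using x by (intro phi_small) (simp add: r_def)
    have lower: "norm v \<le> (2 * B0) * norm (M x *v v)" for v
    proof -
      have "M \<xi>s *v v = M x *v v - (M x - M \<xi>s) *v v" by (simp add: matrix_vector_mult_diff_rdistrib)
      then have "norm (M \<xi>s *v v) \<le> norm (M x *v v) + norm ((M x - M \<xi>s) *v v)"
        by (metis norm_triangle_ineq4)
      also have "norm ((M x - M \<xi>s) *v v) \<le> mb (M x - M \<xi>s) * norm v" by (rule mb_bound)
      also have "\<dots> \<le> 1 / (2 * B0) * norm v" using ph by (intro mult_right_mono) auto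
      finally have "B0 * norm (M \<xi>s *v v) \<le> B0 * (norm (M x *v v) + 1 / (2 * B0) * norm v)"
        using B0pos by (intro mult_left_mono) auto
      also have "\<dots> = B0 * norm (M x *v v) + norm v / 2" using B0pos by (simp add: field_simps)
      finally show ?thesis using low0[of v] by linarith
    qed
    have Minv: "invertible (M x)"
      unfolding invertible_iff_ker
    proof (intro allI impI)
      fix v assume "M x *v v = 0"
      then show "v = 0" using lower[of v] by simp
    qed
    define \<beta> where "\<beta> = newton_beta G Gs f x"
    have Mb: "M x *v \<beta> = - a x"
      unfolding \<beta>_def newton_beta_def M_def[symmetric] a_def[symmetric] by (rule matrix_inv_solves[OF Minv])
    have na: "norm (a x) \<le> Ka * norm e"
    proof -
      have "norm (a x) \<le> (\<Sum>j\<in>UNIV. \<bar>a x $ j\<bar>)" by (rule norm_le_l1_cart)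
      also have "\<dots> \<le> (\<Sum>j\<in>(UNIV::'n set). Cp * norm e)" unfolding e_def by (rule sum_mono) (rule Cp(1)[OF xc])
      also have "\<dots> = Ka * norm e" by (simp add: Ka_def)
      finally show ?thesis .
    qed
    have res: "norm (M x *v e - a x) \<le> K1 * (norm e)\<^sup>2"
    proof -
      have comp: "\<bar>(M x *v e - a x) $ j\<bar> \<le> Cp * (norm e)\<^sup>2 + (\<Sum>i\<in>UNIV. \<Sum>k\<in>UNIV. \<bar>Gs x i k j\<bar>) * (norm e * norm (a x))" for j
      proof -
        have "(M x *v e - a x) $ j = ((\<Sum>i\<in>UNIV. partial i (\<lambda>y. a y $ j) x * e $ i) - a x $ j)
              + (\<Sum>i\<in>UNIV. \<Sum>k\<in>UNIV. Gs x i k j * e $ i * a x $ k)"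
          by (simp add: matrix_vector_mult_def Mcomp sum.distrib sum_distrib_left sum_distrib_right
              algebra_simps)
        also have "\<bar>\<dots>\<bar> \<le> \<bar>(\<Sum>i\<in>UNIV. partial i (\<lambda>y. a y $ j) x * e $ i) - a x $ j\<bar>
              + \<bar>\<Sum>i\<in>UNIV. \<Sum>k\<in>UNIV. Gs x i k j * e $ i * a x $ k\<bar>" by (rule abs_triangle_ineq)
        also have "\<dots> \<le> Cp * (norm e)\<^sup>2 + (\<Sum>i\<in>UNIV. \<Sum>k\<in>UNIV. \<bar>Gs x i k j\<bar>) * (norm e * norm (a x))"
          using Cp(2)[OF xc, of j] bilin_bound[of "\<lambda>i k. Gs x i k j" e "a x"] unfolding e_def
          by (rule add_mono)
        finally show ?thesis .
      qed
      have "norm (M x *v e - a x) \<le> (\<Sum>j\<in>UNIV. \<bar>(M x *v e - a x) $ j\<bar>)" by (rule norm_le_l1_cart)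
      also have "\<dots> \<le> (\<Sum>j\<in>UNIV. Cp * (norm e)\<^sup>2 + (\<Sum>i\<in>UNIV. \<Sum>k\<in>UNIV. \<bar>Gs x i k j\<bar>) * (norm e * norm (a x)))"
        by (rule sum_mono) (rule comp)
      also have "\<dots> = ?n * Cp * (norm e)\<^sup>2 + (\<Sum>j\<in>UNIV. \<Sum>i\<in>UNIV. \<Sum>k\<in>UNIV. \<bar>Gs x i k j\<bar>) * (norm e * norm (a x))"
        by (simp add: sum.distrib sum_distrib_right)
      also have "\<dots> \<le> ?n * Cp * (norm e)\<^sup>2 + KS * (norm e * (Ka * norm e))"
      proof -
        have "(\<Sum>j\<in>UNIV. \<Sum>i\<in>UNIV. \<Sum>k\<in>UNIV. \<bar>Gs x i k j\<bar>) * (norm e * norm (a x)) \<le> KS * (norm e * norm (a x))"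
          using KS[OF xc] by (intro mult_right_mono) auto
        also have "\<dots> \<le> KS * (norm e * (Ka * norm e))"
          using na by (intro mult_left_mono) (auto simp: KS_def)
        finally show ?thesis by simp
      qed
      also have "\<dots> = K1 * (norm e)\<^sup>2" by (simp add: K1_def algebra_simps power2_eq_square)
      finally show ?thesis .
    qed
    define q where "q = (\<chi> i. (1/2) * (\<Sum>j\<in>UNIV. \<Sum>k\<in>UNIV. Gam x j k i * \<beta> $ j * \<beta> $ k))"
    have qb: "norm q \<le> Kq * (norm \<beta>)\<^sup>2"
    proof -
      have "norm q \<le> (\<Sum>i\<in>UNIV. \<bar>q $ i\<bar>)" by (rule norm_le_l1_cart)
      also have "\<dots> \<le> (\<Sum>i\<in>UNIV. (1/2) * ((\<Sum>j\<in>UNIV. \<Sum>k\<in>UNIV. \<bar>Gam x j k i\<bar>) * (norm \<beta> * norm \<beta>)))"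
      proof (rule sum_mono)
        fix i
        show "\<bar>q $ i\<bar> \<le> (1/2) * ((\<Sum>j\<in>UNIV. \<Sum>k\<in>UNIV. \<bar>Gam x j k i\<bar>) * (norm \<beta> * norm \<beta>))"
          using bilin_bound[of "\<lambda>j k. Gam x j k i" \<beta> \<beta>] by (simp add: q_def abs_mult)
      qed
      also have "\<dots> = (1/2) * (\<Sum>i\<in>UNIV. \<Sum>j\<in>UNIV. \<Sum>k\<in>UNIV. \<bar>Gam x j k i\<bar>) * (norm \<beta>)\<^sup>2"
        by (simp add: sum_distrib_right sum_distrib_left power2_eq_square mult.assoc)
      also have "\<dots> \<le> (1/2) * KG * (norm \<beta>)\<^sup>2"
        using KG[OF xc] by (intro mult_right_mono) auto
      finally show ?thesis by (simp add: Kq_def)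
    qed
    have Neq: "N x - \<xi>s = e + \<beta> - q"
      by (simp add: N_def newton_step_def Let_def \<beta>_def[symmetric] e_def q_def vec_eq_iff)
    have "norm (e + \<beta> - q) \<le> ((2 * B0) * K1 + Kq * ((2 * B0) * Ka)\<^sup>2) * (norm e)\<^sup>2"
      by (rule newton_est[OF lower Mb res na qb]) (use B0pos in \<open>auto simp: Kq_def KG_def\<close>)
    then have "norm (N x - \<xi>s) \<le> Cfin * (norm (x - \<xi>s))\<^sup>2"
      by (simp add: Neq Cfin_def e_def)
    then show ?thesis using xO Minv by blast
  qed
  define Cq where "Cq = max Cfin 0 + 1"
  have Cq: "Cq > 0" "Cfin \<le> Cq" by (auto simp: Cq_def)
  define \<rho> where "\<rho> = min r (1 / (2 * Cq))"
  have \<rho>pos: "\<rho> > 0" using rpos Cq by (simp add: \<rho>_def)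
  have U_step: "N x \<in> ball \<xi>s \<rho> \<and> x \<in> \<Omega> \<and> invertible (M x) \<and>
      norm (N x - \<xi>s) \<le> Cq * (norm (x - \<xi>s))\<^sup>2 \<and> norm (N x - \<xi>s) \<le> norm (x - \<xi>s) / 2"
    if x: "x \<in> ball \<xi>s \<rho>" for x
  proof -
    have xr: "norm (x - \<xi>s) < r" using x by (simp add: \<rho>_def dist_norm norm_minus_commute)
    have xq: "norm (x - \<xi>s) < 1 / (2 * Cq)" using x by (simp add: \<rho>_def dist_norm norm_minus_commute)
    note st = step[OF xr]
    have "Cfin * (norm (x - \<xi>s))\<^sup>2 \<le> Cq * (norm (x - \<xi>s))\<^sup>2" using Cq by (intro mult_right_mono) auto
    then have 1: "norm (N x - \<xi>s) \<le> Cq * (norm (x - \<xi>s))\<^sup>2" using st by linarith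
    have "Cq * (norm (x - \<xi>s))\<^sup>2 = (Cq * norm (x - \<xi>s)) * norm (x - \<xi>s)" by (simp add: power2_eq_square)
    also have "\<dots> \<le> (1/2) * norm (x - \<xi>s)"
    proof (rule mult_right_mono)
      have "Cq * norm (x - \<xi>s) \<le> Cq * (1 / (2 * Cq))" using xq Cq by (intro mult_left_mono) auto
      then show "Cq * norm (x - \<xi>s) \<le> 1/2" using Cq by simp
    qed simp
    finally have 2: "norm (N x - \<xi>s) \<le> norm (x - \<xi>s) / 2" using 1 by simp
    have "norm (x - \<xi>s) < \<rho>" using x by (simp add: dist_norm norm_minus_commute)
    then have "norm (N x - \<xi>s) < \<rho>" using 2 norm_ge_zero[of "x - \<xi>s"] by linarith
    then have "N x \<in> ball \<xi>s \<rho>" by (simp add: dist_norm norm_minus_commute)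
    then show ?thesis using 1 2 st by blast
  qed
  have Usub: "ball \<xi>s \<rho> \<subseteq> \<Omega>"
  proof -
    have "ball \<xi>s \<rho> \<subseteq> cball \<xi>s r1" using rpos by (auto simp: \<rho>_def r_def)
    then show ?thesis using r1(2) by blast
  qed
  have iter: "(N ^^ k) x0 \<in> ball \<xi>s \<rho> \<and> norm ((N ^^ k) x0 - \<xi>s) \<le> (1/2)^k * norm (x0 - \<xi>s)"
    if x0: "x0 \<in> ball \<xi>s \<rho>" for x0 k
  proof (induction k)
    case 0
    then show ?case using x0 by simp
  next
    case (Suc k)
    then have "N ((N ^^ k) x0) \<in> ball \<xi>s \<rho> \<and> norm (N ((N ^^ k) x0) - \<xi>s) \<le> norm ((N ^^ k) x0 - \<xi>s) / 2"
      using U_step by blast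
    then show ?case using Suc by auto
  qed
  have main: "(\<forall>k. (N ^^ k) x0 \<in> \<Omega> \<and> invertible (M ((N ^^ k) x0))) \<and>
      (\<lambda>k. (N ^^ k) x0) \<longlonglongrightarrow> \<xi>s \<and>
      (\<exists>C. \<forall>k. norm ((N ^^ Suc k) x0 - \<xi>s) \<le> C * (norm ((N ^^ k) x0 - \<xi>s))\<^sup>2)"
    if x0: "x0 \<in> ball \<xi>s \<rho>" for x0
  proof (intro conjI allI exI)
    fix k
    show "(N ^^ k) x0 \<in> \<Omega>" "invertible (M ((N ^^ k) x0))"
      using U_step[of "(N ^^ k) x0"] iter[OF x0, of k] by blast+
  next
    fix k
    show "norm ((N ^^ Suc k) x0 - \<xi>s) \<le> Cq * (norm ((N ^^ k) x0 - \<xi>s))\<^sup>2"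
      using U_step[of "(N ^^ k) x0"] iter[OF x0, of k] by simp
  next
    have "((\<lambda>k. (N ^^ k) x0 - \<xi>s) \<longlongrightarrow> 0) sequentially"
    proof (rule Lim_null_comparison)
      show "\<forall>\<^sub>F k in sequentially. norm ((N ^^ k) x0 - \<xi>s) \<le> (1/2)^k * norm (x0 - \<xi>s)"
        using iter[OF x0] by simp
      show "((\<lambda>k. (1/2::real)^k * norm (x0 - \<xi>s)) \<longlongrightarrow> 0) sequentially"
        by (intro tendsto_mult_left_zero LIMSEQ_power_zero) simp
    qed
    then show "(\<lambda>k. (N ^^ k) x0) \<longlonglongrightarrow> \<xi>s" by (simp add: LIM_zero_iff)
  qed
  have "open (ball \<xi>s \<rho>) \<and> \<xi>s \<in> ball \<xi>s \<rho> \<and> ball \<xi>s \<rho> \<subseteq> \<Omega>"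
    using \<rho>pos Usub by simp
  then show ?thesis unfolding N_def[symmetric] M_def[symmetric] using main by blast
qed

end
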